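(* Let $\Sigma\in\mathcal{G}_n$ and let $Q_0$ be the unique regular rational orthogonal matrix with $Q_0^{\rm T}S(\Sigma)Q_0=S(\Sigma^{\rm T})$; suppose its level is $\ell_0=p_1p_2$ with $p_1,p_2$ distinct odd primes. Suppose $\Sigma$ is not WDGSS and that its generalized cospectral mates (up to isomorphism) are $\Sigma^{\rm T}$, $\Delta$ and $\Delta^{\rm T}$. Let $Q_1\in\mathcal{Q}(\Sigma)$ of level $p_1$ satisfy $Q_1^{\rm T}S(\Sigma)Q_1=S(\Delta)$, and let $Q_2$ be a regular rational orthogonal matrix of level $p_2$ satisfying $Q_2^{\rm T}S(\Delta)Q_2=S(\Sigma^{\rm T})$. If $\hat Q_0$ is a regular rational orthogonal matrix with $\hat Q_0^{\rm T}S(\Delta^{\rm T})\hat Q_0=S(\Delta)$, then $\hat Q_0=Q_2Q_1$ and the level of $\hat Q_0$ is $p_1p_2$.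
   Context: An oriented graph on vertices $v_1,\dots,v_n$ is a simple graph with each edge directed; its skew-adjacency matrix $S=(s_{ij})$ has $s_{ij}=1$ if $(v_i,v_j)$ is an arc, $-1$ if $(v_j,v_i)$ is an arc, $0$ otherwise. The converse $\Delta^{\rm T}$ of $\Delta$ reverses every arc, so $S(\Delta^{\rm T})=-S(\Delta)$. Two oriented graphs are isomorphic if their skew-adjacency matrices are conjugate by a permutation matrix; they are generalized cospectral if their skew-adjacency matrices $S$ have the same spectrum and the matrices $J-I-S$ have the same spectrum. A generalized cospectral mate of $\Sigma$ is an oriented graph generalized cospectral with but not isomorphic to $\Sigma$. $\Sigma$ is WDGSS if every oriented graph generalized cospectral with $\Sigma$ is isomorphic to $\Sigma$ or $\Sigma^{\rm T}$. With $e$ the all-one vector, $W(\Sigma)=[e,Se,\dots,S^{n-1}e]$, $S=S(\Sigma)$. $\mathcal{G}_n$ is the set of $n$-vertex oriented graphs with $2^{-\lfloor n/2\rfloor}\det W(\Sigma)$ an odd square-free integer. A rational orthogonal matrix $Q$ is regular if $Qe=e$; its level is the least positive integer $k$ with $kQ$ integral. $\mathcal{Q}(\Sigma)$ is the set of regular rational orthogonal $Q$ with $Q^{\rm T}S(\Sigma)Q=S(\Gamma)$ for some oriented graph $\Gamma$ generalized cospectral with $\Sigma$. *)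

theory Defs
  imports "Jordan_Normal_Form.Char_Poly" "HOL-Computational_Algebra.Squarefree"
          "HOL-Combinatorics.Permutations"
begin

text \<open>An oriented graph on n vertices is identified with its skew-adjacency matrix.\<close>
definition oriented_graph :: "nat \<Rightarrow> int mat \<Rightarrow> bool" where
  "oriented_graph n S \<longleftrightarrow> S \<in> carrier_mat n n \<and> (\<forall>i<n. S $$ (i,i) = 0) \<and>
     (\<forall>i<n. \<forall>j<n. S $$ (i,j) \<in> {-1,0,1} \<and> S $$ (j,i) = - S $$ (i,j))"

definition perm_mat :: "nat \<Rightarrow> (nat \<Rightarrow> nat) \<Rightarrow> int mat" where
  "perm_mat n \<sigma> = mat n n (\<lambda>(i,j). if \<sigma> i = j then 1 else 0)"

definition iso_og :: "nat \<Rightarrow> int mat \<Rightarrow> int mat \<Rightarrow> bool" where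
  "iso_og n S T \<longleftrightarrow> (\<exists>\<sigma>. \<sigma> permutes {..<n} \<and>
      (perm_mat n \<sigma>)\<^sup>T * S * perm_mat n \<sigma> = T)"

definition all_one_mat :: "nat \<Rightarrow> int mat" where
  "all_one_mat n = mat n n (\<lambda>_. 1)"

definition gen_cospectral :: "nat \<Rightarrow> int mat \<Rightarrow> int mat \<Rightarrow> bool" where
  "gen_cospectral n S T \<longleftrightarrow> char_poly S = char_poly T \<and>
     char_poly (all_one_mat n - 1\<^sub>m n - S) = char_poly (all_one_mat n - 1\<^sub>m n - T)"

definition WDGSS :: "nat \<Rightarrow> int mat \<Rightarrow> bool" where
  "WDGSS n S \<longleftrightarrow> (\<forall>T. oriented_graph n T \<and> gen_cospectral n S T \<longrightarrow>
       iso_og n S T \<or> iso_og n (- S) T)"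

definition walk_mat :: "nat \<Rightarrow> int mat \<Rightarrow> int mat" where
  "walk_mat n S = mat n n (\<lambda>(i,j). ((S ^\<^sub>m j) *\<^sub>v vec n (\<lambda>_. 1)) $ i)"

definition in_G :: "nat \<Rightarrow> int mat \<Rightarrow> bool" where
  "in_G n S \<longleftrightarrow> oriented_graph n S \<and> 2 ^ (n div 2) dvd det (walk_mat n S) \<and>
     odd (det (walk_mat n S) div 2 ^ (n div 2)) \<and>
     squarefree (det (walk_mat n S) div 2 ^ (n div 2))"

definition ratm :: "int mat \<Rightarrow> rat mat" where
  "ratm S = map_mat rat_of_int S"

definition reg_rat_orth :: "nat \<Rightarrow> rat mat \<Rightarrow> bool" where
  "reg_rat_orth n Q \<longleftrightarrow> Q \<in> carrier_mat n n \<and> Q\<^sup>T * Q = 1\<^sub>m n \<and>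
     Q *\<^sub>v vec n (\<lambda>_. 1) = vec n (\<lambda>_. 1)"

definition level :: "nat \<Rightarrow> rat mat \<Rightarrow> nat" where
  "level n Q = (LEAST k::nat. 0 < k \<and> (\<forall>i<n. \<forall>j<n. of_nat k * Q $$ (i,j) \<in> \<int>))"

definition Qset :: "nat \<Rightarrow> int mat \<Rightarrow> rat mat set" where
  "Qset n S = {Q. reg_rat_orth n Q \<and> (\<exists>T. oriented_graph n T \<and> gen_cospectral n S T \<and>
                   Q\<^sup>T * ratm S * Q = ratm T)}"

end

theory Submission
  imports Defs
begin
definition intm :: "nat \<Rightarrow> nat \<Rightarrow> rat mat \<Rightarrow> bool" where
  "intm n k Q \<longleftrightarrow> (\<forall>i<n. \<forall>j<n. of_nat k * Q $$ (i,j) \<in> \<int>)"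

lemma den_int: "of_int (snd (quotient_of q)) * q \<in> \<int>"
proof -
  obtain a b where ab: "quotient_of q = (a,b)" by (cases "quotient_of q")
  then have "b > 0" using quotient_of_denom_pos by blast
  moreover have "q = of_int a / of_int b" using ab quotient_of_div by blast
  ultimately have "of_int b * q = of_int a" by simp
  then show ?thesis using ab by simp
qed

lemma intm_exists: "\<exists>k>0. intm n k Q"
proof -
  let ?I = "{..<n} \<times> {..<n}"
  define k where "k = (\<Prod>p\<in>?I. nat (snd (quotient_of (Q $$ p))))"
  have pos: "\<And>q. snd (quotient_of q) > 0" using quotient_of_denom_pos by (metis prod.collapse)
  have "k > 0" unfolding k_def by (rule prod_pos) (use pos in auto)
  moreover have "intm n k Q" unfolding intm_def
  proof (intro allI impI)
    fix i j assume ij: "i < n" "j < n"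
    let ?b = "nat (snd (quotient_of (Q $$ (i,j))))"
    have "?b dvd k" unfolding k_def by (rule dvd_prodI) (use ij in auto)
    then obtain m where m: "k = ?b * m" by blast
    have "of_nat k * Q $$ (i,j) = of_nat m * (of_int (snd (quotient_of (Q $$ (i,j)))) * Q $$ (i,j))"
      using m pos[of "Q $$ (i,j)"] by (simp add: of_nat_mult)
    also have "\<dots> \<in> \<int>" using den_int by (rule Ints_mult[OF Ints_of_nat])
    finally show "of_nat k * Q $$ (i,j) \<in> \<int>" .
  qed
  ultimately show ?thesis by blast
qed

lemma level_props:
  shows "0 < level n Q" "intm n (level n Q) Q" "\<And>k. 0 < k \<Longrightarrow> intm n k Q \<Longrightarrow> level n Q dvd k"
proof -
  have lv: "level n Q = (LEAST k. 0 < k \<and> intm n k Q)" unfolding level_def intm_def by simp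
  obtain k0 where k0: "0 < k0" "intm n k0 Q" using intm_exists by blast
  have L: "0 < level n Q \<and> intm n (level n Q) Q" unfolding lv by (rule LeastI[of _ k0]) (use k0 in auto)
  then show "0 < level n Q" "intm n (level n Q) Q" by auto
  fix k assume k: "0 < k" "intm n k Q"
  let ?l = "level n Q"
  let ?g = "gcd ?l k"
  obtain u v where uv: "u * int ?l + v * int k = gcd (int ?l) (int k)" using bezout_int by blast
  have gi: "int ?g = u * int ?l + v * int k" using uv by (simp add: gcd_int_int_eq)
  have "intm n ?g Q" unfolding intm_def
  proof (intro allI impI)
    fix i j assume ij: "i < n" "j < n"
    have "of_nat ?g * Q $$ (i,j) = of_int (int ?g) * Q $$ (i,j)" by simp
    also have "\<dots> = of_int u * (of_nat ?l * Q $$ (i,j)) + of_int v * (of_nat k * Q $$ (i,j))"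
      unfolding gi by (simp add: algebra_simps)
    also have "\<dots> \<in> \<int>" using L k ij unfolding intm_def
      by (intro Ints_add Ints_mult[OF Ints_of_int]) auto
    finally show "of_nat ?g * Q $$ (i,j) \<in> \<int>" .
  qed
  moreover have "0 < ?g" using k by simp
  ultimately have "?l \<le> ?g" unfolding lv by (intro Least_le) auto
  moreover have "?g \<le> ?l" using L by (simp add: gcd_le1_nat)
  ultimately have "?g = ?l" by simp
  then show "?l dvd k" by (metis gcd_dvd2)
qed

lemma intm_mult: assumes "A \<in> carrier_mat n n" "B \<in> carrier_mat n n" "intm n a A" "intm n b B"
  shows "intm n (a*b) (A*B)"
  unfolding intm_def
proof (intro allI impI)
  fix i j assume ij: "i < n" "j < n"
  have "of_nat (a*b) * (A*B) $$ (i,j) = (\<Sum>k<n. (of_nat a * A $$ (i,k)) * (of_nat b * B $$ (k,j)))"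
    using assms ij by (simp add: scalar_prod_def sum_distrib_left atLeast0LessThan algebra_simps)
  also have "\<dots> \<in> \<int>"
  proof (rule Ints_sum)
    fix x assume "x \<in> {..<n}"
    then show "(of_nat a * A $$ (i,x)) * (of_nat b * B $$ (x,j)) \<in> \<int>"
      using assms ij unfolding intm_def by (intro Ints_mult[of "of_nat a * A $$ (i,x)"]) auto
  qed
  finally show "of_nat (a*b) * (A*B) $$ (i,j) \<in> \<int>" .
qed

lemma intm_T: assumes "A \<in> carrier_mat n n" "intm n a A" shows "intm n a (A\<^sup>T)"
  using assms unfolding intm_def by auto

lemma orth_right: assumes "Q \<in> carrier_mat n n" "Q\<^sup>T * Q = 1\<^sub>m n"
  shows "Q * Q\<^sup>T = (1\<^sub>m n :: rat mat)"
  using mat_mult_left_right_inverse[of "Q\<^sup>T" n Q] assms by auto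

lemma rro_T: assumes "reg_rat_orth n Q" shows "reg_rat_orth n (Q\<^sup>T)"
proof -
  have c: "Q \<in> carrier_mat n n" "Q\<^sup>T * Q = 1\<^sub>m n" "Q *\<^sub>v vec n (\<lambda>_. 1) = vec n (\<lambda>_. 1)"
    using assms unfolding reg_rat_orth_def by auto
  have "Q\<^sup>T *\<^sub>v (Q *\<^sub>v vec n (\<lambda>_. 1)) = (Q\<^sup>T * Q) *\<^sub>v vec n (\<lambda>_. 1)"
    using c by (subst assoc_mult_mat_vec[of _ n n _ n]) auto
  then have "Q\<^sup>T *\<^sub>v vec n (\<lambda>_. 1) = vec n (\<lambda>_. 1)" using c by auto
  then show ?thesis using c orth_right[OF c(1,2)] unfolding reg_rat_orth_def by auto
qed

lemma rro_mult: assumes "reg_rat_orth n Q" "reg_rat_orth n P" shows "reg_rat_orth n (Q * P)"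
proof -
  have c: "Q \<in> carrier_mat n n" "Q\<^sup>T * Q = 1\<^sub>m n" "Q *\<^sub>v vec n (\<lambda>_. 1) = vec n (\<lambda>_. 1)"
    "P \<in> carrier_mat n n" "P\<^sup>T * P = 1\<^sub>m n" "P *\<^sub>v vec n (\<lambda>_. 1) = vec n (\<lambda>_. 1)"
    using assms unfolding reg_rat_orth_def by auto
  have "(Q * P)\<^sup>T * (Q * P) = P\<^sup>T * (Q\<^sup>T * (Q * P))"
    using c by (simp add: transpose_mult[of _ n n] assoc_mult_mat[of _ n n _ n _ n])
  also have "\<dots> = P\<^sup>T * ((Q\<^sup>T * Q) * P)" using c by (metis assoc_mult_mat transpose_carrier_mat)
  also have "\<dots> = 1\<^sub>m n" using c by simp
  finally have 1: "(Q * P)\<^sup>T * (Q * P) = 1\<^sub>m n" .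
  have "(Q * P) *\<^sub>v vec n (\<lambda>_. 1) = vec n (\<lambda>_. 1)"
    using c by (simp add: assoc_mult_mat_vec[of _ n n _ n])
  then show ?thesis using 1 c unfolding reg_rat_orth_def by auto
qed

lemma ratm_uminus: "ratm (- S) = - ratm S"
  unfolding ratm_def by (intro eq_matI) auto

lemma ratm_carrier: "oriented_graph n S \<Longrightarrow> ratm S \<in> carrier_mat n n"
  unfolding ratm_def oriented_graph_def by auto


lemma rassoc: assumes "A \<in> carrier_mat n n" "B \<in> carrier_mat n n" "C \<in> carrier_mat n n"
  "A * B * C = R" "Z \<in> carrier_mat n nc"
  shows "A * (B * (C * Z)) = R * Z"
proof -
  have "A * (B * (C * Z)) = A * ((B * C) * Z)" using assms by simp
  also have "\<dots> = (A * (B * C)) * Z" using assms by (simp del: assoc_mult_mat add: assoc_mult_mat[of A n n "B*C" n Z nc, symmetric])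
  also have "A * (B * C) = R" using assms by (simp del: assoc_mult_mat add: assoc_mult_mat[of A n n B n C n, symmetric])
  finally show ?thesis .
qed

lemma rassoc2: assumes "A \<in> carrier_mat n n" "B \<in> carrier_mat n n"
  "A * B = R" "Z \<in> carrier_mat n nc"
  shows "A * (B * Z) = R * Z"
  using assms by (simp del: assoc_mult_mat add: assoc_mult_mat[of A n n B n Z nc, symmetric])

theorem lemma5p3:
  fixes n p1 p2 :: nat and S D :: "int mat" and Q0 Q1 Q2 Qh :: "rat mat"
  assumes SG: "in_G n S"
    and Q0: "reg_rat_orth n Q0" "Q0\<^sup>T * ratm S * Q0 = ratm (- S)"
    and Q0_unique: "\<forall>Q. reg_rat_orth n Q \<and> Q\<^sup>T * ratm S * Q = ratm (- S) \<longrightarrow> Q = Q0"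
    and lev0: "level n Q0 = p1 * p2"
    and primes: "prime p1" "prime p2" "odd p1" "odd p2" "p1 \<noteq> p2"
    and notW: "\<not> WDGSS n S"
    and D: "oriented_graph n D" "gen_cospectral n S D"
    and mates: "\<forall>T. oriented_graph n T \<and> gen_cospectral n S T \<longrightarrow>
                  iso_og n S T \<or> iso_og n (- S) T \<or> iso_og n D T \<or> iso_og n (- D) T"
    and distinct: "\<not> iso_og n S (- S)" "\<not> iso_og n S D" "\<not> iso_og n S (- D)"
                  "\<not> iso_og n (- S) D" "\<not> iso_og n (- S) (- D)" "\<not> iso_og n D (- D)"
    and Q1: "Q1 \<in> Qset n S" "level n Q1 = p1" "Q1\<^sup>T * ratm S * Q1 = ratm D"
    and Q2: "reg_rat_orth n Q2" "level n Q2 = p2" "Q2\<^sup>T * ratm D * Q2 = ratm (- S)"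
    and Qh: "reg_rat_orth n Qh" "Qh\<^sup>T * ratm (- D) * Qh = ratm D"
  shows "Qh = Q2 * Q1 \<and> level n Qh = p1 * p2"
proof -
  have r1: "reg_rat_orth n Q1" using Q1(1) unfolding Qset_def by auto
  have c1: "Q1 \<in> carrier_mat n n" "Q1\<^sup>T * Q1 = 1\<^sub>m n" using r1 unfolding reg_rat_orth_def by auto
  have c1': "Q1 * Q1\<^sup>T = 1\<^sub>m n" using orth_right c1 by blast
  have c2: "Q2 \<in> carrier_mat n n" "Q2\<^sup>T * Q2 = 1\<^sub>m n" using Q2 unfolding reg_rat_orth_def by auto
  have ch: "Qh \<in> carrier_mat n n" "Qh\<^sup>T * Qh = 1\<^sub>m n" using Qh unfolding reg_rat_orth_def by auto
  have c0: "Q0 \<in> carrier_mat n n" using Q0 unfolding reg_rat_orth_def by auto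
  have cS: "ratm S \<in> carrier_mat n n" using SG ratm_carrier unfolding in_G_def by blast
  have cD: "ratm D \<in> carrier_mat n n" using D ratm_carrier by blast
  note cs = c1(1) c2(1) ch(1) c0 cS cD
  note AS = assoc_mult_mat[of _ n n _ n _ n]
  have hD: "Qh\<^sup>T * ratm D * Qh = - ratm D"
  proof -
    have "- (Qh\<^sup>T * ratm D * Qh) = ratm D" using Qh(2) cs unfolding ratm_uminus by simp
    then show ?thesis by (metis uminus_uminus_mat)
  qed
  have hS2: "Q2\<^sup>T * ratm D * Q2 = - ratm S" using Q2(3) ratm_uminus by simp
  note R1 = rassoc[OF _ _ _ Q1(3), where nc=n] rassoc[OF _ _ _ hD, where nc=n] rassoc[OF _ _ _ hS2, where nc=n]
    rassoc2[OF _ _ c1(2), where nc=n] rassoc2[OF _ _ c1', where nc=n] rassoc2[OF _ _ c2(2), where nc=n]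
  define Q where "Q = Q1 * Qh * Q1\<^sup>T"
  have rQ: "reg_rat_orth n Q" unfolding Q_def using r1 Qh(1) by (intro rro_mult rro_T)
  have QT: "Q\<^sup>T = Q1 * (Qh\<^sup>T * Q1\<^sup>T)" unfolding Q_def using cs
    by (simp add: transpose_mult[of "Q1*Qh" n n "Q1\<^sup>T" n] transpose_mult[of Q1 n n Qh n] del: assoc_mult_mat)
  have "Q\<^sup>T * ratm S * Q = Q1 * (Qh\<^sup>T * (Q1\<^sup>T * (ratm S * (Q1 * (Qh * Q1\<^sup>T)))))"
    unfolding QT unfolding Q_def using cs by (simp add: AS)
  also have "\<dots> = Q1 * (- ratm D * Q1\<^sup>T)" using cs by (simp add: AS R1)
  also have "\<dots> = - (Q1 * (Q1\<^sup>T * (ratm S * (Q1 * Q1\<^sup>T))))" using cs Q1(3)[symmetric] by (simp add: AS)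
  also have "\<dots> = - ratm S" using cs by (simp add: AS R1 c1')
  finally have "Q = Q0" using Q0_unique rQ ratm_uminus by auto
  have rP: "reg_rat_orth n (Q1 * Q2)" using r1 Q2(1) by (intro rro_mult)
  have "(Q1 * Q2)\<^sup>T * ratm S * (Q1 * Q2) = Q2\<^sup>T * (Q1\<^sup>T * (ratm S * (Q1 * Q2)))"
    using cs by (simp add: AS transpose_mult[of _ n n])
  also have "\<dots> = - ratm S" using cs hS2 by (simp add: AS R1)
  finally have "Q1 * Q2 = Q0" using Q0_unique rP ratm_uminus by auto
  have eq: "Q1 * Qh * Q1\<^sup>T = Q1 * Q2" using \<open>Q = Q0\<close> \<open>Q1 * Q2 = Q0\<close> Q_def by simp
  have "Qh * Q1\<^sup>T = Q2"
  proof -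
    have "Q1\<^sup>T * (Q1 * Qh * Q1\<^sup>T) = Q1\<^sup>T * (Q1 * Q2)" using eq by simp
    then show ?thesis using cs by (simp add: AS R1)
  qed
  then have "Qh * Q1\<^sup>T * Q1 = Q2 * Q1" by simp
  then have QhE: "Qh = Q2 * Q1" using cs by (simp add: AS c1(2))
  have Q0a: "Q0 = Q1 * Qh * Q1\<^sup>T" using \<open>Q = Q0\<close> Q_def by simp
  have Q0b: "Q0 = Q2\<^sup>T * Qh * Q2"
    using \<open>Q1 * Q2 = Q0\<close> QhE cs by (simp add: AS R1)
  define d where "d = level n Qh"
  have i1: "intm n p1 Q1" and i2: "intm n p2 Q2" and ih: "intm n d Qh"
    using level_props(2) Q1(2) Q2(2) d_def by metis+
  have p0: "p1 > 0" "p2 > 0" using primes prime_gt_0_nat by auto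
  have A0: "d dvd p2 * p1" unfolding d_def
    by (rule level_props(3)) (use p0 QhE intm_mult[OF c2(1) c1(1) i2 i1] in auto)
  have A1: "p1 * p2 dvd p1 * d * p1" unfolding lev0[symmetric]
    by (rule level_props(3)) (use p0 level_props(1)[of n Qh] d_def
        Q0a intm_mult[OF _ _ intm_mult[OF c1(1) ch(1) i1 ih] intm_T[OF c1(1) i1]] cs in auto)
  have A2: "p1 * p2 dvd p2 * d * p2" unfolding lev0[symmetric]
    by (rule level_props(3)) (use p0 level_props(1)[of n Qh] d_def
        Q0b intm_mult[OF _ _ intm_mult[OF _ ch(1) intm_T[OF c2(1) i2] ih] i2] cs in auto)
  have np: "\<not> p2 dvd p1" "\<not> p1 dvd p2" using primes primes_dvd_imp_eq by blast+
  have "p2 dvd p1 * d * p1" using A1 by (metis dvd_mult_right mult.commute)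
  then have "p2 dvd d" using np primes by (simp add: prime_dvd_mult_iff)
  have "p1 dvd p2 * d * p2" using A2 by (metis dvd_mult_left)
  then have "p1 dvd d" using np primes by (simp add: prime_dvd_mult_iff)
  have "coprime p1 p2" using primes by (simp add: primes_coprime)
  then have "p1 * p2 dvd d" using \<open>p1 dvd d\<close> \<open>p2 dvd d\<close> by (simp add: divides_mult)
  then have "d = p1 * p2" using A0 by (simp add: dvd_antisym mult.commute)
  then show ?thesis using QhE d_def by simp
qed
end
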